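(* Let $d\ge 1$, let $p_t(x)=(2\pi t)^{-d/2}e^{-|x|^2/(2t)}$ ($t>0$, $x\in\mathbb{R}^d$) be the heat kernel, and for a nonnegative kernel $f$ on $\mathbb{R}^d$, $u,v>0$ and $y,z\in\mathbb{R}^d$ put $$J_f(u,v,y,z)=\int_{\mathbb{R}^d}\int_{\mathbb{R}^d}p_u(x-y)\,p_v(x'-z)\,f(x-x')\,dx\,dx'.$$ (i) If $f$ is the Riesz kernel of order $\alpha\in(0,d)$, or the Bessel kernel of order $\alpha\in(0,d)$, then there is a constant $D_{\alpha,d}>0$ depending only on $\alpha$ and $d$ such that $J_f(u,v,y,z)\le D_{\alpha,d}\,(u+v)^{-(d-\alpha)/2}$ for all $u,v>0$ and all $y,z\in\mathbb{R}^d$. (ii) If $f$ is the heat kernel of order $\alpha>0$, or the Poisson kernel of order $\alpha>0$, then there is a constant $C_{\alpha,d}$ such that $J_f(u,v,y,z)\le C_{\alpha,d}$ for all $u,v>0$ and all $y,z\in\mathbb{R}^d$.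
   Context: $|x|$ denotes the Euclidean norm on $\mathbb{R}^d$. The kernels are: Riesz kernel of order $\alpha$ ($0<\alpha<d$): $f(x)=\gamma_{\alpha,d}|x|^{-d+\alpha}$ with $\gamma_{\alpha,d}=\Gamma((d-\alpha)/2)2^{-\alpha}\pi^{-d/2}/\Gamma(\alpha/2)$. Bessel kernel of order $\alpha>0$: $f(x)=\gamma'_\alpha\int_0^\infty w^{(\alpha-d)/2-1}e^{-w}e^{-|x|^2/(4w)}\,dw$ with $\gamma'_\alpha=(4\pi)^{\alpha/2}\Gamma(\alpha/2)$. Heat kernel of order $\alpha>0$: $f(x)=(2\pi\alpha)^{-d/2}e^{-|x|^2/(2\alpha)}$. Poisson kernel of order $\alpha>0$: $f(x)=C_d\,\alpha\,(|x|^2+\alpha^2)^{-(d+1)/2}$ with $C_d=\pi^{-(d+1)/2}\Gamma((d+1)/2)$. *)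

theory Defs
  imports "HOL-Analysis.Analysis"
begin

text \<open>Points of R^d are vectors of type real ^ 'n, with d = CARD('n).\<close>

definition heat_p :: "real \<Rightarrow> real ^ 'n \<Rightarrow> real" where
  "heat_p t x = (2 * pi * t) powr (- real CARD('n) / 2) * exp (- (norm x)\<^sup>2 / (2 * t))"

definition riesz_kernel :: "real \<Rightarrow> real ^ 'n \<Rightarrow> real" where
  "riesz_kernel \<alpha> x =
     (let d = real CARD('n) in
      Gamma ((d - \<alpha>) / 2) * 2 powr (- \<alpha>) * pi powr (- d / 2) / Gamma (\<alpha> / 2)
      * norm x powr (- d + \<alpha>))"

definition bessel_kernel :: "real \<Rightarrow> real ^ 'n \<Rightarrow> real" where
  "bessel_kernel \<alpha> x =
     (let d = real CARD('n) in
      (4 * pi) powr (\<alpha> / 2) * Gamma (\<alpha> / 2) *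
      (LINT w|lborel. indicator {0<..} w *
         (w powr ((\<alpha> - d) / 2 - 1) * exp (- w) * exp (- (norm x)\<^sup>2 / (4 * w)))))"

definition heat_kernel :: "real \<Rightarrow> real ^ 'n \<Rightarrow> real" where
  "heat_kernel \<alpha> x = (2 * pi * \<alpha>) powr (- real CARD('n) / 2) * exp (- (norm x)\<^sup>2 / (2 * \<alpha>))"

definition poisson_kernel :: "real \<Rightarrow> real ^ 'n \<Rightarrow> real" where
  "poisson_kernel \<alpha> x =
     (let d = real CARD('n) in
      pi powr (- (d + 1) / 2) * Gamma ((d + 1) / 2) * \<alpha> * ((norm x)\<^sup>2 + \<alpha>\<^sup>2) powr (- (d + 1) / 2))"

definition Jf :: "(real ^ 'n \<Rightarrow> real) \<Rightarrow> real \<Rightarrow> real \<Rightarrow> real ^ 'n \<Rightarrow> real ^ 'n \<Rightarrow> ennreal" where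
  "Jf f u v y z =
     (\<integral>\<^sup>+ x'. (\<integral>\<^sup>+ x. ennreal (heat_p u (x - y) * heat_p v (x' - z) * f (x - x')) \<partial>lborel) \<partial>lborel)"

end

theory Submission
  imports Defs "HOL-Probability.Probability"
begin

lemma nn_integral_lborel_prod_enn:
  assumes [measurable]: "\<And>b. b \<in> Basis \<Longrightarrow> f b \<in> borel_measurable borel"
  shows "(\<integral>\<^sup>+x. (\<Prod>b\<in>Basis. f b (x \<bullet> b)) \<partial>(lborel::'a::euclidean_space measure)) = (\<Prod>b\<in>Basis. (\<integral>\<^sup>+x. f b x \<partial>lborel))"
proof -
  interpret finite_product_sigma_finite "\<lambda>_. lborel::real measure" "Basis::'a set"
    proof qed simp
  show ?thesis
    apply (subst lborel_eq)
    apply (subst nn_integral_distr)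
    apply (auto simp: product_nn_integral_prod product_nn_integral_singleton)
    done
qed

definition g1 :: "real \<Rightarrow> real \<Rightarrow> real" where
  "g1 t s = normal_density 0 (sqrt t) s"

lemma g1_eq: "0 < t \<Longrightarrow> g1 t s = (2*pi*t) powr (-1/2) * exp (- s\<^sup>2 / (2 * t))"
proof -
  assume t: "0 < t"
  have 1: "(sqrt t)\<^sup>2 = t" using t by simp
  have 2: "(2*pi*t) powr (-1/2) = 1 / sqrt (2*pi*t)"
    using t by (simp add: powr_minus_divide powr_half_sqrt)
  show ?thesis unfolding g1_def normal_density_def 1 2 by simp
qed

lemma g1_nn: "0 \<le> g1 t s" by (simp add: g1_def)
lemma g1_meas[measurable]: "g1 t \<in> borel_measurable borel" by (simp add: g1_def[abs_def])

lemma g1_int: "0 < t \<Longrightarrow> (\<integral>\<^sup>+s. ennreal (g1 t (s - a)) \<partial>lborel) = 1"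
proof -
  assume t: "0 < t"
  have "(\<integral>\<^sup>+s. ennreal (g1 t (s - a)) \<partial>lborel) = (\<integral>\<^sup>+s. ennreal (normal_density a (sqrt t) s) \<partial>lborel)"
    by (simp add: g1_def normal_density_def)
  also have "\<dots> = 1"
    using t by (subst nn_integral_eq_integral) (auto simp: integral_normal_moment_even[of "sqrt t" a 0, simplified])
  finally show ?thesis .
qed

lemma g1_le: "0 < t \<Longrightarrow> g1 t s \<le> (2*pi*t) powr (-1/2)"
  unfolding g1_eq by (intro mult_left_le) auto

lemma heat_p_prod:
  fixes x :: "real ^ 'n"
  assumes t: "0 < t"
  shows "heat_p t x = (\<Prod>b\<in>Basis. g1 t (x \<bullet> b))"
proof -
  have "(\<Prod>b\<in>Basis. g1 t (x \<bullet> b)) = (\<Prod>b\<in>(Basis::(real^'n) set). (2*pi*t) powr (-1/2) * exp (- (x \<bullet> b)\<^sup>2 / (2 * t)))"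
    using t by (simp add: g1_eq)
  also have "\<dots> = ((2*pi*t) powr (-1/2)) ^ CARD('n) * exp (\<Sum>b\<in>(Basis::(real^'n) set). - (x \<bullet> b)\<^sup>2 / (2 * t))"
    by (simp add: prod.distrib exp_sum)
  also have "((2*pi*t) powr (-1/2)) ^ CARD('n) = (2*pi*t) powr (- real CARD('n) / 2)"
    using t by (simp add: powr_realpow[symmetric] powr_powr)
  also have "(\<Sum>b\<in>(Basis::(real^'n) set). - (x \<bullet> b)\<^sup>2 / (2 * t)) = - (norm x)\<^sup>2 / (2*t)"
  proof -
    have "(\<Sum>b\<in>(Basis::(real^'n) set). (x \<bullet> b)\<^sup>2) = x \<bullet> x"
      by (simp add: euclidean_inner[of x x] power2_eq_square)
    also have "\<dots> = (norm x)\<^sup>2" by (simp add: dot_square_norm)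
    finally show ?thesis by (simp add: sum_divide_distrib[symmetric] sum_negf)
  qed
  finally show ?thesis by (simp add: heat_p_def)
qed

lemma heat_p_meas[measurable]: "(\<lambda>x. heat_p t (x - a)) \<in> borel_measurable borel"
  unfolding heat_p_def by measurable

lemma heat_p_nn: "0 \<le> heat_p t x" by (simp add: heat_p_def)

lemma heat_p_int:
  fixes a :: "real ^ 'n"
  assumes t: "0 < t"
  shows "(\<integral>\<^sup>+x. ennreal (heat_p t (x - a)) \<partial>lborel) = 1"
proof -
  have "(\<integral>\<^sup>+x. ennreal (heat_p t (x - a)) \<partial>lborel) = (\<integral>\<^sup>+x. (\<Prod>b\<in>Basis. ennreal (g1 t (x \<bullet> b - a \<bullet> b))) \<partial>lborel)"
    using t by (simp add: heat_p_prod prod_ennreal g1_nn inner_diff_left)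
  also have "\<dots> = (\<Prod>b\<in>(Basis::(real^'n) set). (\<integral>\<^sup>+s. ennreal (g1 t (s - a \<bullet> b)) \<partial>lborel))"
    by (rule nn_integral_lborel_prod_enn[where f="\<lambda>b s. ennreal (g1 t (s - a \<bullet> b))"]) measurable
  also have "\<dots> = 1" using t by (simp add: g1_int)
  finally show ?thesis .
qed

definition hh :: "real \<Rightarrow> real \<Rightarrow> ennreal" where
  "hh \<beta> s = (if s = 0 then \<top> else ennreal (\<bar>s\<bar> powr (-\<beta>)))"

lemma hh_meas[measurable]: "hh \<beta> \<in> borel_measurable borel"
  unfolding hh_def[abs_def] by measurable

lemma pow_int0:
  assumes b: "0 < \<beta>" "\<beta> < 1" and r: "0 \<le> r"
  shows "(\<integral>\<^sup>+s. ennreal (s powr (-\<beta>)) * indicator {0..r} s \<partial>lborel) = ennreal (r powr (1-\<beta>) / (1-\<beta>))"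
proof -
  have "((\<lambda>x. x powr (-\<beta>)) has_integral (r powr (-\<beta>+1) / (-\<beta>+1))) {0..r}"
    using b r by (intro has_integral_powr_from_0) auto
  then show ?thesis
    by (subst nn_integral_has_integral_lebesgue') (auto simp: add.commute)
qed

lemma pow_int_sym:
  assumes b: "0 < \<beta>" "\<beta> < 1" and r: "0 \<le> r"
  shows "(\<integral>\<^sup>+s. ennreal (\<bar>s - c\<bar> powr (-\<beta>)) * indicator {x. \<bar>x - c\<bar> \<le> r} s \<partial>lborel)
     \<le> 2 * ennreal (r powr (1-\<beta>) / (1-\<beta>))"
proof -
  define F where "F = (\<lambda>s::real. ennreal (s powr (-\<beta>)) * indicator {0..r} s)"
  have [measurable]: "F \<in> borel_measurable borel" unfolding F_def by measurable
  have "(\<integral>\<^sup>+s. ennreal (\<bar>s - c\<bar> powr (-\<beta>)) * indicator {x. \<bar>x - c\<bar> \<le> r} s \<partial>lborel)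
      \<le> (\<integral>\<^sup>+s. F (s - c) + F (c - s) \<partial>lborel)"
    by (intro nn_integral_mono) (auto simp: F_def indicator_def abs_if)
  also have "\<dots> = (\<integral>\<^sup>+s. F (s - c) \<partial>lborel) + (\<integral>\<^sup>+s. F (c - s) \<partial>lborel)"
    by (intro nn_integral_add) auto
  also have "(\<integral>\<^sup>+s. F (s - c) \<partial>lborel) = (\<integral>\<^sup>+s. F s \<partial>lborel)"
    using nn_integral_real_affine[of "\<lambda>s. F (s - c)" 1 c] by simp
  also have "(\<integral>\<^sup>+s. F (c - s) \<partial>lborel) = (\<integral>\<^sup>+s. F s \<partial>lborel)"
    using nn_integral_real_affine[of "\<lambda>s. F (c - s)" "-1" c] by simp
  also have "(\<integral>\<^sup>+s. F s \<partial>lborel) = ennreal (r powr (1-\<beta>) / (1-\<beta>))"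
    unfolding F_def using pow_int0[OF b r] .
  finally show ?thesis by (simp add: mult_2)
qed

lemma sing1:
  assumes b: "0 < \<beta>" "\<beta> < 1" and t: "0 < t"
  shows "(\<integral>\<^sup>+s. ennreal (g1 t (s - a)) * hh \<beta> (s - c) \<partial>lborel)
     \<le> ennreal ((2 / (1-\<beta>) + 1) * t powr (-\<beta>/2))"
proof -
  define r where "r = t powr (1/2)"
  have r: "0 < r" using t by (simp add: r_def)
  define G0 where "G0 = (2*pi*t) powr (-1/2)"
  have G0: "0 \<le> G0" by (simp add: G0_def)
  have G0le: "G0 \<le> t powr (-1/2)"
  proof -
    have "G0 = (2*pi) powr (-1/2) * t powr (-1/2)" using t by (simp add: G0_def powr_mult)
    also have "(2*pi) powr (-1/2) \<le> 1" using pi_gt3 powr_mono[of "-1/2" 0 "2*pi"] by simp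
    then have "(2*pi) powr (-1/2) * t powr (-1/2) \<le> 1 * t powr (-1/2)"
      by (intro mult_right_mono) auto
    finally show ?thesis by simp
  qed
  define S where "S = (\<lambda>s::real. ennreal (\<bar>s - c\<bar> powr (-\<beta>)) * indicator {x. \<bar>x - c\<bar> \<le> r} s)"
  have [measurable]: "S \<in> borel_measurable borel" unfolding S_def by measurable
  have "(\<integral>\<^sup>+s. ennreal (g1 t (s - a)) * hh \<beta> (s - c) \<partial>lborel)
      \<le> (\<integral>\<^sup>+s. ennreal G0 * S s + ennreal (r powr (-\<beta>)) * ennreal (g1 t (s - a)) \<partial>lborel)"
  proof (intro nn_integral_mono_AE)
    show "AE s in lborel. ennreal (g1 t (s - a)) * hh \<beta> (s - c)
        \<le> ennreal G0 * S s + ennreal (r powr (-\<beta>)) * ennreal (g1 t (s - a))"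
      using AE_lborel_singleton[of c]
    proof eventually_elim
      case (elim s)
      have gle: "g1 t (s - a) \<le> G0" using g1_le[OF t] by (simp add: G0_def)
      have gnn: "0 \<le> g1 t (s - a)" by (rule g1_nn)
      have hs: "hh \<beta> (s - c) = ennreal (\<bar>s - c\<bar> powr (-\<beta>))" using elim by (simp add: hh_def)
      show ?case
      proof (cases "\<bar>s - c\<bar> \<le> r")
        case True
        have "g1 t (s - a) * \<bar>s - c\<bar> powr (-\<beta>) \<le> G0 * \<bar>s - c\<bar> powr (-\<beta>)"
          using gle by (intro mult_right_mono) auto
        then have "ennreal (g1 t (s - a)) * hh \<beta> (s - c) \<le> ennreal G0 * S s"
          using True gnn G0 by (simp add: hs S_def ennreal_mult[symmetric])
        then show ?thesis by (rule order_trans) simp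
      next
        case False
        have "\<bar>s - c\<bar> powr (-\<beta>) \<le> r powr (-\<beta>)"
          using False r b by (intro powr_mono2') auto
        then have "g1 t (s - a) * \<bar>s - c\<bar> powr (-\<beta>) \<le> r powr (-\<beta>) * g1 t (s - a)"
          using gnn by (subst mult.commute) (rule mult_left_mono)
        then have "ennreal (g1 t (s - a)) * hh \<beta> (s - c) \<le> ennreal (r powr (-\<beta>)) * ennreal (g1 t (s - a))"
          using gnn by (simp add: hs ennreal_mult[symmetric])
        then show ?thesis by (rule order_trans) simp
      qed
    qed
  qed
  also have "\<dots> = ennreal G0 * (\<integral>\<^sup>+s. S s \<partial>lborel) + ennreal (r powr (-\<beta>)) * (\<integral>\<^sup>+s. ennreal (g1 t (s - a)) \<partial>lborel)"
    by (simp add: nn_integral_add nn_integral_cmult)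
  also have "\<dots> \<le> ennreal G0 * (2 * ennreal (r powr (1-\<beta>) / (1-\<beta>))) + ennreal (r powr (-\<beta>)) * 1"
    using pow_int_sym[OF b, of r c] r g1_int[OF t, of a] unfolding S_def
    by (intro add_mono mult_left_mono) auto
  also have "\<dots> = ennreal (G0 * (2 * (r powr (1-\<beta>) / (1-\<beta>))) + r powr (-\<beta>))"
  proof -
    have X: "0 \<le> r powr (1-\<beta>) / (1-\<beta>)" using b by simp
    have "\<And>X. 0 \<le> X \<Longrightarrow> ennreal G0 * (2 * ennreal X) = ennreal (G0 * (2 * X))"
      using G0 by (simp add: ennreal_mult)
    from this[OF X] have "ennreal G0 * (2 * ennreal (r powr (1-\<beta>) / (1-\<beta>))) = ennreal (G0 * (2 * (r powr (1-\<beta>) / (1-\<beta>))))" .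
    then show ?thesis using G0 X b by (subst ennreal_plus) auto
  qed
  also have "\<dots> \<le> ennreal ((2 / (1-\<beta>) + 1) * t powr (-\<beta>/2))"
  proof (intro ennreal_leI)
    have e1: "r powr (1-\<beta>) = t powr ((1-\<beta>)/2)" using t by (simp add: r_def powr_powr)
    have e2: "r powr (-\<beta>) = t powr (-\<beta>/2)" using t by (simp add: r_def powr_powr)
    have e3: "t powr (-1/2) * t powr ((1-\<beta>)/2) = t powr (-\<beta>/2)"
      using t by (simp add: powr_add[symmetric] diff_divide_distrib)
    have "G0 * (2 * (r powr (1-\<beta>) / (1-\<beta>))) \<le> t powr (-1/2) * (2 * (r powr (1-\<beta>) / (1-\<beta>)))"
      using G0le b r by (intro mult_right_mono) auto
    also have "\<dots> = 2 / (1-\<beta>) * t powr (-\<beta>/2)"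
      unfolding e1 using e3 by (simp add: field_simps)
    finally show "G0 * (2 * (r powr (1-\<beta>) / (1-\<beta>))) + r powr (-\<beta>) \<le> (2 / (1-\<beta>) + 1) * t powr (-\<beta>/2)"
      unfolding e2 by (simp add: distrib_right)
  qed
  finally show ?thesis .
qed

lemma norm_pow_le_prod:
  fixes w :: "real ^ 'n"
  assumes a: "0 < \<alpha>" "\<alpha> < real CARD('n)"
  shows "ennreal (norm w powr (\<alpha> - real CARD('n))) \<le> (\<Prod>b\<in>Basis. hh ((real CARD('n) - \<alpha>) / real CARD('n)) (w \<bullet> b))"
    (is "_ \<le> (\<Prod>b\<in>Basis. hh ?\<beta> _)")
proof (cases "\<exists>b\<in>Basis. w \<bullet> b = 0")
  case True
  have "(\<Prod>b\<in>(Basis::(real^'n) set). hh ?\<beta> (w \<bullet> b)) = \<top>"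
    using True by (subst ennreal_prod_eq_top) (auto simp: hh_def)
  then show ?thesis by simp
next
  case False
  then have w0: "w \<noteq> 0" using nonempty_Basis by (metis ex_in_conv inner_zero_left)
  have d: "0 < real CARD('n)" by simp
  have "norm w powr (\<alpha> - real CARD('n)) = (norm w powr (- ?\<beta>)) ^ CARD('n)"
  proof -
    have e: "- ?\<beta> * real CARD('n) = \<alpha> - real CARD('n)" using d by (simp add: field_simps)
    have "(norm w powr (- ?\<beta>)) ^ CARD('n) = (norm w powr (- ?\<beta>)) powr real CARD('n)"
      using w0 by (simp add: powr_realpow)
    also have "\<dots> = norm w powr (\<alpha> - real CARD('n))" by (simp add: powr_powr e)
    finally show ?thesis by simp
  qed
  also have "(norm w powr (- ?\<beta>)) ^ CARD('n) = (\<Prod>b\<in>(Basis::(real^'n) set). norm w powr (- ?\<beta>))"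
    by simp
  also have "\<dots> \<le> (\<Prod>b\<in>(Basis::(real^'n) set). \<bar>w \<bullet> b\<bar> powr (- ?\<beta>))"
  proof (intro prod_mono conjI)
    fix b :: "real^'n" assume b: "b \<in> Basis"
    show "0 \<le> norm w powr (- ?\<beta>)" by simp
    show "norm w powr (- ?\<beta>) \<le> \<bar>w \<bullet> b\<bar> powr (- ?\<beta>)"
      using False b a Basis_le_norm[OF b, of w] by (intro powr_mono2') auto
  qed
  finally have R: "norm w powr (\<alpha> - real CARD('n)) \<le> (\<Prod>b\<in>(Basis::(real^'n) set). \<bar>w \<bullet> b\<bar> powr (- ?\<beta>))" .
  then have "ennreal (norm w powr (\<alpha> - real CARD('n))) \<le> ennreal (\<Prod>b\<in>(Basis::(real^'n) set). \<bar>w \<bullet> b\<bar> powr (- ?\<beta>))"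
    by (rule ennreal_leI)
  then show ?thesis
    using False by (simp add: hh_def prod_ennreal)
qed

lemma sing_d:
  fixes a c :: "real ^ 'n"
  assumes a: "0 < \<alpha>" "\<alpha> < real CARD('n)" and t: "0 < t"
  defines "\<beta> \<equiv> (real CARD('n) - \<alpha>) / real CARD('n)"
  shows "(\<integral>\<^sup>+x. ennreal (heat_p t (x - a)) * ennreal (norm (x - c) powr (\<alpha> - real CARD('n))) \<partial>lborel)
     \<le> ennreal ((2 / (1-\<beta>) + 1) ^ CARD('n) * t powr ((\<alpha> - real CARD('n))/2))"
proof -
  have b: "0 < \<beta>" "\<beta> < 1" using a by (auto simp: \<beta>_def field_simps)
  define K where "K = 2 / (1-\<beta>) + 1"
  have "(\<integral>\<^sup>+x. ennreal (heat_p t (x - a)) * ennreal (norm (x - c) powr (\<alpha> - real CARD('n))) \<partial>lborel)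
     \<le> (\<integral>\<^sup>+x. (\<Prod>b\<in>Basis. ennreal (g1 t (x \<bullet> b - a \<bullet> b)) * hh \<beta> (x \<bullet> b - c \<bullet> b)) \<partial>lborel)"
  proof (intro nn_integral_mono)
    fix x :: "real^'n"
    have "ennreal (heat_p t (x - a)) = (\<Prod>b\<in>Basis. ennreal (g1 t (x \<bullet> b - a \<bullet> b)))"
      using t by (simp add: heat_p_prod prod_ennreal g1_nn inner_diff_left)
    moreover have "ennreal (norm (x - c) powr (\<alpha> - real CARD('n))) \<le> (\<Prod>b\<in>Basis. hh \<beta> (x \<bullet> b - c \<bullet> b))"
      using norm_pow_le_prod[OF a, of "x - c"] by (simp add: \<beta>_def inner_diff_left)
    ultimately show "ennreal (heat_p t (x - a)) * ennreal (norm (x - c) powr (\<alpha> - real CARD('n)))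
       \<le> (\<Prod>b\<in>Basis. ennreal (g1 t (x \<bullet> b - a \<bullet> b)) * hh \<beta> (x \<bullet> b - c \<bullet> b))"
      by (simp add: prod.distrib mult_left_mono)
  qed
  also have "\<dots> = (\<Prod>b\<in>(Basis::(real^'n) set). (\<integral>\<^sup>+s. ennreal (g1 t (s - a \<bullet> b)) * hh \<beta> (s - c \<bullet> b) \<partial>lborel))"
    by (rule nn_integral_lborel_prod_enn[where f="\<lambda>b s. ennreal (g1 t (s - a \<bullet> b)) * hh \<beta> (s - c \<bullet> b)"]) measurable
  also have "\<dots> \<le> (\<Prod>b\<in>(Basis::(real^'n) set). ennreal (K * t powr (-\<beta>/2)))"
    by (intro prod_mono_ennreal sing1[OF b t, folded K_def])
  also have "\<dots> = ennreal ((K * t powr (-\<beta>/2)) ^ CARD('n))"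
    using b by (simp add: prod_ennreal K_def ennreal_power)
  also have "(K * t powr (-\<beta>/2)) ^ CARD('n) = K ^ CARD('n) * t powr ((\<alpha> - real CARD('n))/2)"
  proof -
    have e: "-\<beta>/2 * real CARD('n) = (\<alpha> - real CARD('n))/2" by (simp add: \<beta>_def field_simps)
    have "(t powr (-\<beta>/2)) ^ CARD('n) = (t powr (-\<beta>/2)) powr real CARD('n)"
      using t by (simp add: powr_realpow)
    also have "\<dots> = t powr ((\<alpha> - real CARD('n))/2)" by (simp only: powr_powr e)
    finally show ?thesis by (simp add: power_mult_distrib)
  qed
  finally show ?thesis by (simp add: K_def)
qed

lemma heat_p_meas2[measurable]: "heat_p t \<in> borel_measurable borel"
  unfolding heat_p_def[abs_def] by measurable

lemma J_sing:
  fixes f :: "real ^ 'n \<Rightarrow> real" and y z :: "real ^ 'n"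
  assumes a: "0 < \<alpha>" "\<alpha> < real CARD('n)" and M: "0 \<le> M"
    and fb: "\<And>w. w \<noteq> 0 \<Longrightarrow> f w \<le> M * norm w powr (\<alpha> - real CARD('n))"
    and u: "0 < u" and v: "0 < v"
  defines "KK \<equiv> (2 / (1 - (real CARD('n) - \<alpha>) / real CARD('n)) + 1) ^ CARD('n)"
  shows "Jf f u v y z \<le> ennreal (M * KK * (max u v) powr ((\<alpha> - real CARD('n))/2))"
proof -
  define e where "e = \<alpha> - real CARD('n)"
  define N where "N = (\<lambda>x x'::real^'n. (ennreal (heat_p v (x' - z)) * ennreal M) * (ennreal (heat_p u (x - y)) * ennreal (norm (x - x') powr e)))"
  have KK: "0 \<le> KK" using a unfolding KK_def by (simp add: field_simps)
  have Nmeas: "case_prod N \<in> borel_measurable (lborel \<Otimes>\<^sub>M lborel)"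
    unfolding N_def by measurable
  have "Jf f u v y z \<le> (\<integral>\<^sup>+x'. (\<integral>\<^sup>+x. N x x' \<partial>lborel) \<partial>lborel)"
    unfolding Jf_def
  proof (rule nn_integral_mono, rule nn_integral_mono_AE)
    fix x' :: "real^'n"
    show "AE x in lborel. ennreal (heat_p u (x - y) * heat_p v (x' - z) * f (x - x')) \<le> N x x'"
      using AE_lborel_singleton[of x']
    proof eventually_elim
      case (elim x)
      have pq: "0 \<le> heat_p u (x - y) * heat_p v (x' - z)" by (simp add: heat_p_nn)
      have "heat_p u (x - y) * heat_p v (x' - z) * f (x - x') \<le> heat_p u (x - y) * heat_p v (x' - z) * (M * norm (x - x') powr e)"
        using fb[of "x - x'"] elim pq unfolding e_def by (intro mult_left_mono) auto
      then have "ennreal (heat_p u (x - y) * heat_p v (x' - z) * f (x - x')) \<le> ennreal (heat_p u (x - y) * heat_p v (x' - z) * (M * norm (x - x') powr e))"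
        by (rule ennreal_leI)
      also have "\<dots> = N x x'"
        unfolding N_def using M by (simp add: ennreal_mult heat_p_nn ac_simps)
      finally show ?case .
    qed
  qed
  also have "\<dots> \<le> ennreal (M * KK * (max u v) powr (e/2))"
  proof (cases "v \<le> u")
    case True
    have "(\<integral>\<^sup>+x'. (\<integral>\<^sup>+x. N x x' \<partial>lborel) \<partial>lborel)
        = (\<integral>\<^sup>+x'. (ennreal (heat_p v (x' - z)) * ennreal M) * (\<integral>\<^sup>+x. ennreal (heat_p u (x - y)) * ennreal (norm (x - x') powr e) \<partial>lborel) \<partial>lborel)"
      unfolding N_def by (intro nn_integral_cong nn_integral_cmult) measurable
    also have "\<dots> \<le> (\<integral>\<^sup>+x'. (ennreal (heat_p v (x' - z)) * ennreal M) * ennreal (KK * u powr (e/2)) \<partial>lborel)"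
      using sing_d[OF a u, of y] unfolding KK_def e_def
      by (intro nn_integral_mono mult_left_mono) auto
    also have "\<dots> = (\<integral>\<^sup>+x'. ennreal (heat_p v (x' - z)) * ennreal (M * (KK * u powr (e/2))) \<partial>lborel)"
      using M KK by (simp add: ennreal_mult mult.assoc)
    also have "\<dots> = ennreal (M * (KK * u powr (e/2)))"
      using heat_p_int[OF v, of z] by (simp add: nn_integral_multc)
    finally show ?thesis using True by (simp add: max_def mult.assoc)
  next
    case False
    have "(\<integral>\<^sup>+x'. (\<integral>\<^sup>+x. N x x' \<partial>lborel) \<partial>lborel) = (\<integral>\<^sup>+x. (\<integral>\<^sup>+x'. N x x' \<partial>lborel) \<partial>lborel)"
      by (rule lborel_pair.Fubini'[OF Nmeas])
    also have "\<dots> = (\<integral>\<^sup>+x. (ennreal (heat_p u (x - y)) * ennreal M) * (\<integral>\<^sup>+x'. ennreal (heat_p v (x' - z)) * ennreal (norm (x' - x) powr e) \<partial>lborel) \<partial>lborel)"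
      unfolding N_def
      by (intro nn_integral_cong) (subst nn_integral_cmult[symmetric], measurable, simp add: norm_minus_commute ac_simps)
    also have "\<dots> \<le> (\<integral>\<^sup>+x. (ennreal (heat_p u (x - y)) * ennreal M) * ennreal (KK * v powr (e/2)) \<partial>lborel)"
      using sing_d[OF a v, of z] unfolding KK_def e_def
      by (intro nn_integral_mono mult_left_mono) auto
    also have "\<dots> = (\<integral>\<^sup>+x. ennreal (heat_p u (x - y)) * ennreal (M * (KK * v powr (e/2))) \<partial>lborel)"
      using M KK by (simp add: ennreal_mult mult.assoc)
    also have "\<dots> = ennreal (M * (KK * v powr (e/2)))"
      using heat_p_int[OF u, of y] by (simp add: nn_integral_multc)
    finally show ?thesis using False by (simp add: max_def mult.assoc)
  qed
  finally show ?thesis by (simp add: e_def)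
qed

lemma exp_neg_le_pow:
  assumes y: "0 < y" and m: "0 < m"
  shows "exp (- y) \<le> (real m / y) ^ m"
proof -
  have "(y / real m) ^ m \<le> exp (y / real m) ^ m"
    using y m by (intro power_mono) (auto intro: order_trans[OF _ exp_ge_add_one_self])
  also have "\<dots> = exp y" using m by (simp add: exp_of_nat_mult[symmetric])
  finally have "(y / real m) ^ m \<le> exp y" .
  moreover have "0 < (y / real m) ^ m" using y m by simp
  ultimately have "1 / exp y \<le> 1 / (y / real m) ^ m"
    by (intro divide_left_mono) auto
  then show ?thesis by (simp add: exp_minus field_simps power_divide)
qed

lemma bessel_int_bound:
  assumes c: "0 < c" and a: "a < 0" and m: "0 < m" "0 < a + real m"
  shows "(\<integral>\<^sup>+w. ennreal (indicator {0<..} w * (w powr (a - 1) * exp (- w) * exp (- c / w))) \<partial>lborel)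
     \<le> ennreal (c powr a * (real m ^ m / (a + real m) - 1 / a))"
proof -
  define K where "K = real m ^ m * c powr (- real m)"
  have K: "0 \<le> K" by (simp add: K_def)
  have "(\<integral>\<^sup>+w. ennreal (indicator {0<..} w * (w powr (a - 1) * exp (- w) * exp (- c / w))) \<partial>lborel)
     \<le> (\<integral>\<^sup>+w. ennreal K * (ennreal (w powr (a + real m - 1)) * indicator {0..c} w)
          + ennreal (w powr (a - 1)) * indicator {c..} w \<partial>lborel)"
  proof (intro nn_integral_mono)
    fix w :: real
    show "ennreal (indicator {0<..} w * (w powr (a - 1) * exp (- w) * exp (- c / w)))
      \<le> ennreal K * (ennreal (w powr (a + real m - 1)) * indicator {0..c} w) + ennreal (w powr (a - 1)) * indicator {c..} w"
    proof (cases "0 < w")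
      case False then show ?thesis by simp
    next
      case w: True
      show ?thesis
      proof (cases "w \<le> c")
        case True
        have "exp (- c / w) \<le> (real m / (c / w)) ^ m"
          using exp_neg_le_pow[of "c / w" m] c w m by simp
        also have "\<dots> = real m ^ m * c powr (- real m) * w ^ m"
          using c w by (simp add: power_divide powr_minus powr_realpow field_simps)
        finally have e1: "exp (- c / w) \<le> real m ^ m * c powr (- real m) * w ^ m" .
        have "w powr (a - 1) * exp (- w) * exp (- c / w) \<le> w powr (a - 1) * 1 * (real m ^ m * c powr (- real m) * w ^ m)"
          using e1 w by (intro mult_mono) auto
        also have "\<dots> = K * w powr (a + real m - 1)"
          using w by (simp add: K_def powr_realpow[symmetric] powr_add[symmetric] algebra_simps)
        finally have "ennreal (indicator {0<..} w * (w powr (a - 1) * exp (- w) * exp (- c / w))) \<le> ennreal K * (ennreal (w powr (a + real m - 1)) * indicator {0..c} w)"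
          using w True K by (simp add: ennreal_mult[symmetric])
        then show ?thesis by (rule order_trans) simp
      next
        case False
        have "w powr (a - 1) * exp (- w) * exp (- c / w) \<le> w powr (a - 1) * 1 * 1"
          using w c by (intro mult_mono) auto
        then have "ennreal (indicator {0<..} w * (w powr (a - 1) * exp (- w) * exp (- c / w))) \<le> ennreal (w powr (a - 1)) * indicator {c..} w"
          using w False by simp
        then show ?thesis by (rule order_trans) simp
      qed
    qed
  qed
  also have "\<dots> = ennreal K * (\<integral>\<^sup>+w. ennreal (w powr (a + real m - 1)) * indicator {0..c} w \<partial>lborel)
          + (\<integral>\<^sup>+w. ennreal (w powr (a - 1)) * indicator {c..} w \<partial>lborel)"
    by (simp add: nn_integral_add nn_integral_cmult)
  also have "(\<integral>\<^sup>+w. ennreal (w powr (a + real m - 1)) * indicator {0..c} w \<partial>lborel) = ennreal (c powr (a + real m) / (a + real m))"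
  proof -
    have "((\<lambda>x. x powr (a + real m - 1)) has_integral (c powr (a + real m - 1 + 1) / (a + real m - 1 + 1))) {0..c}"
      using m c by (intro has_integral_powr_from_0) auto
    then show ?thesis by (subst nn_integral_has_integral_lebesgue') auto
  qed
  also have "(\<integral>\<^sup>+w. ennreal (w powr (a - 1)) * indicator {c..} w \<partial>lborel) = ennreal (- (c powr a) / a)"
  proof -
    have "((\<lambda>x. x powr (a - 1)) has_integral (-(c powr (a - 1 + 1)) / (a - 1 + 1))) {c..}"
      using a c by (intro has_integral_powr_to_inf) auto
    then show ?thesis using a by (subst nn_integral_has_integral_lebesgue') (auto simp: divide_nonpos_neg)
  qed
  also have "ennreal K * ennreal (c powr (a + real m) / (a + real m)) + ennreal (- (c powr a) / a)
      = ennreal (K * (c powr (a + real m) / (a + real m)) + - (c powr a) / a)"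
  proof -
    have g: "\<And>X Y. 0 \<le> X \<Longrightarrow> 0 \<le> Y \<Longrightarrow> ennreal K * ennreal X + ennreal Y = ennreal (K * X + Y)"
      using K by (simp add: ennreal_mult ennreal_plus)
    show ?thesis by (rule g) (use m a in \<open>auto simp: divide_nonneg_neg\<close>)
  qed
  also have "K * (c powr (a + real m) / (a + real m)) + - (c powr a) / a = c powr a * (real m ^ m / (a + real m) - 1 / a)"
    using c by (simp add: K_def powr_add powr_minus field_simps)
  finally show ?thesis .
qed

lemma bessel_le:
  fixes x :: "real ^ 'n"
  assumes al: "0 < \<alpha>" "\<alpha> < real CARD('n)" and x: "x \<noteq> 0"
  defines "a \<equiv> (\<alpha> - real CARD('n)) / 2"
  shows "bessel_kernel \<alpha> x \<le> ((4 * pi) powr (\<alpha> / 2) * Gamma (\<alpha> / 2) * 4 powr (- a)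
            * (real CARD('n) ^ CARD('n) / (a + real CARD('n)) - 1 / a)) * norm x powr (\<alpha> - real CARD('n))"
proof -
  define m where "m = CARD('n)"
  define c where "c = (norm x)\<^sup>2 / 4"
  have c: "0 < c" using x by (simp add: c_def)
  have a: "a < 0" "0 < a + real m" using al by (auto simp: a_def m_def field_simps)
  define Q where "Q = real m ^ m / (a + real m) - 1 / a"
  have Q: "0 \<le> Q"
  proof -
    have h1: "1 / a \<le> 0" using a by (simp add: divide_nonpos_neg)
    have h2: "0 \<le> real m ^ m / (a + real m)" using a by simp
    show ?thesis unfolding Q_def using h1 h2 by linarith
  qed
  define F where "F = (\<lambda>w::real. indicator {0<..} w * (w powr (a - 1) * exp (- w) * exp (- c / w)))"
  have Fm: "F \<in> borel_measurable borel" unfolding F_def by measurable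
  have Fnn: "\<And>w. 0 \<le> F w" unfolding F_def by (simp add: indicator_def)
  have eqF: "(\<lambda>w. indicator {0<..} w * (w powr ((\<alpha> - real CARD('n)) / 2 - 1) * exp (- w) * exp (- (norm x)\<^sup>2 / (4 * w)))) = F"
  proof (rule ext)
    fix w :: real
    have "- (norm x)\<^sup>2 / (4 * w) = - c / w" unfolding c_def by (simp add: divide_divide_eq_left)
    then show "indicator {0<..} w * (w powr ((\<alpha> - real CARD('n)) / 2 - 1) * exp (- w) * exp (- (norm x)\<^sup>2 / (4 * w))) = F w"
      unfolding F_def a_def by simp
  qed
  have "(LINT w|lborel. F w) = enn2real (\<integral>\<^sup>+w. ennreal (F w) \<partial>lborel)"
    using Fm Fnn by (intro integral_eq_nn_integral) auto
  also have "\<dots> \<le> c powr a * Q"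
    using bessel_int_bound[OF c a(1) _ a(2)[unfolded m_def], folded m_def] Q c
    unfolding F_def Q_def m_def by (intro enn2real_leI) auto
  finally have L: "(LINT w|lborel. F w) \<le> c powr a * Q" .
  have ca: "c powr a = 4 powr (- a) * norm x powr (\<alpha> - real CARD('n))"
  proof -
    have "c powr a = ((norm x)\<^sup>2) powr a / 4 powr a" unfolding c_def by (simp add: powr_divide)
    also have "((norm x)\<^sup>2) powr a = norm x powr (\<alpha> - real CARD('n))"
    proof -
      have n: "0 < norm x" using x by simp
      have "(norm x)\<^sup>2 = norm x powr 2" using n by (simp add: powr_numeral)
      then have "((norm x)\<^sup>2) powr a = norm x powr (2 * a)" by (simp only: powr_powr)
      moreover have "2 * a = \<alpha> - real CARD('n)" by (simp add: a_def)
      ultimately show ?thesis by simp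
    qed
    finally show ?thesis by (simp add: powr_minus_divide)
  qed
  have g: "0 \<le> (4 * pi) powr (\<alpha> / 2) * Gamma (\<alpha> / 2)"
    using al by (simp add: Gamma_real_pos less_imp_le)
  have "bessel_kernel \<alpha> x = (4 * pi) powr (\<alpha> / 2) * Gamma (\<alpha> / 2) * (LINT w|lborel. F w)"
    unfolding bessel_kernel_def Let_def eqF ..
  also have "\<dots> \<le> (4 * pi) powr (\<alpha> / 2) * Gamma (\<alpha> / 2) * (c powr a * Q)"
    by (rule mult_left_mono[OF L g])
  also have "\<dots> = ((4 * pi) powr (\<alpha> / 2) * Gamma (\<alpha> / 2) * 4 powr (- a)
            * (real CARD('n) ^ CARD('n) / (a + real CARD('n)) - 1 / a)) * norm x powr (\<alpha> - real CARD('n))"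
    unfolding ca Q_def m_def by (simp add: ac_simps)
  finally show ?thesis .
qed

lemma J_bdd:
  fixes f :: "real ^ 'n \<Rightarrow> real" and y z :: "real ^ 'n"
  assumes M: "0 \<le> M" and fb: "\<And>w. f w \<le> M" and u: "0 < u" and v: "0 < v"
  shows "Jf f u v y z \<le> ennreal M"
proof -
  have "Jf f u v y z \<le> (\<integral>\<^sup>+x'. (\<integral>\<^sup>+x. (ennreal (heat_p v (x' - z)) * ennreal M) * ennreal (heat_p u (x - y)) \<partial>lborel) \<partial>lborel)"
    unfolding Jf_def
  proof (intro nn_integral_mono)
    fix x x' :: "real^'n"
    have pq: "0 \<le> heat_p u (x - y) * heat_p v (x' - z)" by (simp add: heat_p_nn)
    have "heat_p u (x - y) * heat_p v (x' - z) * f (x - x') \<le> heat_p u (x - y) * heat_p v (x' - z) * M"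
      using fb pq by (intro mult_left_mono) auto
    then have "ennreal (heat_p u (x - y) * heat_p v (x' - z) * f (x - x')) \<le> ennreal (heat_p u (x - y) * heat_p v (x' - z) * M)"
      by (rule ennreal_leI)
    also have "\<dots> = (ennreal (heat_p v (x' - z)) * ennreal M) * ennreal (heat_p u (x - y))"
      using M by (simp add: ennreal_mult heat_p_nn ac_simps)
    finally show "ennreal (heat_p u (x - y) * heat_p v (x' - z) * f (x - x')) \<le> (ennreal (heat_p v (x' - z)) * ennreal M) * ennreal (heat_p u (x - y))" .
  qed
  also have "\<dots> = (\<integral>\<^sup>+x'. ennreal (heat_p v (x' - z)) * ennreal M \<partial>lborel)"
    by (intro nn_integral_cong) (simp add: nn_integral_cmult heat_p_int[OF u])
  also have "\<dots> = ennreal M"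
    using heat_p_int[OF v, of z] by (simp add: nn_integral_multc)
  finally show ?thesis .
qed

lemma max_powr_le:
  fixes u v e :: real
  assumes u: "0 < u" and v: "0 < v" and e: "e \<le> 0"
  shows "(max u v) powr e \<le> 2 powr (- e) * (u + v) powr e"
proof -
  have "(max u v) powr e \<le> ((u + v) / 2) powr e"
    using u v e by (intro powr_mono2') auto
  also have "\<dots> = 2 powr (- e) * (u + v) powr e"
    using u v by (simp add: powr_divide powr_minus_divide)
  finally show ?thesis .
qed

lemma J_sing_final:
  fixes f :: "real ^ 'n \<Rightarrow> real"
  assumes a: "0 < \<alpha>" "\<alpha> < real CARD('n)"
    and fb: "\<And>w. w \<noteq> 0 \<Longrightarrow> f w \<le> M * norm w powr (\<alpha> - real CARD('n))"
  shows "\<exists>D>0. \<forall>u>0. \<forall>v>0. \<forall>y z :: real ^ 'n.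
               Jf f u v y z \<le> ennreal (D * (u + v) powr (- (real CARD('n) - \<alpha>) / 2))"
proof -
  define M' where "M' = max M 1"
  have M': "0 < M'" by (simp add: M'_def)
  have fb': "\<And>w. w \<noteq> 0 \<Longrightarrow> f w \<le> M' * norm w powr (\<alpha> - real CARD('n))"
  proof -
    fix w :: "real^'n" assume "w \<noteq> 0"
    have "M * norm w powr (\<alpha> - real CARD('n)) \<le> M' * norm w powr (\<alpha> - real CARD('n))"
      by (intro mult_right_mono) (auto simp: M'_def)
    then show "f w \<le> M' * norm w powr (\<alpha> - real CARD('n))" using fb[OF \<open>w \<noteq> 0\<close>] by linarith
  qed
  define KK where "KK = (2 / (1 - (real CARD('n) - \<alpha>) / real CARD('n)) + 1) ^ CARD('n)"
  have KK: "0 < KK"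
  proof -
    have "0 < 1 - (real CARD('n) - \<alpha>) / real CARD('n)" using a by (simp add: field_simps)
    then show ?thesis unfolding KK_def by (intro zero_less_power) (auto intro: add_pos_pos)
  qed
  define e where "e = (\<alpha> - real CARD('n)) / 2"
  have e: "e \<le> 0" using a by (simp add: e_def)
  define D where "D = M' * KK * 2 powr (- e)"
  have D: "0 < D" using M' KK by (simp add: D_def)
  have ee: "- (real CARD('n) - \<alpha>) / 2 = e" by (simp add: e_def)
  show ?thesis
  proof (intro exI[of _ D] conjI allI impI)
    show "0 < D" by (fact D)
    fix u v :: real and y z :: "real^'n"
    assume u: "0 < u" and v: "0 < v"
    have "Jf f u v y z \<le> ennreal (M' * KK * (max u v) powr e)"
      using J_sing[OF a _ fb' u v, of y z] M' unfolding KK_def e_def by simp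
    also have "\<dots> \<le> ennreal (D * (u + v) powr e)"
    proof (intro ennreal_leI)
      have "M' * KK * (max u v) powr e \<le> M' * KK * (2 powr (- e) * (u + v) powr e)"
        using M' KK max_powr_le[OF u v e] by (intro mult_left_mono) auto
      then show "M' * KK * (max u v) powr e \<le> D * (u + v) powr e" by (simp add: D_def ac_simps)
    qed
    finally show "Jf f u v y z \<le> ennreal (D * (u + v) powr (- (real CARD('n) - \<alpha>) / 2))"
      unfolding ee .
  qed
qed

theorem lemma3p3:
  fixes \<alpha> :: real
  shows "(0 < \<alpha> \<and> \<alpha> < real CARD('n) \<longrightarrow>
            (\<exists>D>0. \<forall>u>0. \<forall>v>0. \<forall>y z :: real ^ 'n.
               Jf (riesz_kernel \<alpha>) u v y z \<le> ennreal (D * (u + v) powr (- (real CARD('n) - \<alpha>) / 2)))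
          \<and> (\<exists>D>0. \<forall>u>0. \<forall>v>0. \<forall>y z :: real ^ 'n.
               Jf (bessel_kernel \<alpha>) u v y z \<le> ennreal (D * (u + v) powr (- (real CARD('n) - \<alpha>) / 2))))
       \<and> (0 < \<alpha> \<longrightarrow>
            (\<exists>C. \<forall>u>0. \<forall>v>0. \<forall>y z :: real ^ 'n.
               Jf (heat_kernel \<alpha>) u v y z \<le> ennreal C)
          \<and> (\<exists>C. \<forall>u>0. \<forall>v>0. \<forall>y z :: real ^ 'n.
               Jf (poisson_kernel \<alpha>) u v y z \<le> ennreal C))"
proof (intro conjI impI)
  assume "0 < \<alpha> \<and> \<alpha> < real CARD('n)"
  then have a: "0 < \<alpha>" "\<alpha> < real CARD('n)" by auto
  show "\<exists>D>0. \<forall>u>0. \<forall>v>0. \<forall>y z :: real ^ 'n.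
               Jf (riesz_kernel \<alpha>) u v y z \<le> ennreal (D * (u + v) powr (- (real CARD('n) - \<alpha>) / 2))"
    by (rule J_sing_final[OF a, where M="Gamma ((real CARD('n) - \<alpha>) / 2) * 2 powr (- \<alpha>) * pi powr (- real CARD('n) / 2) / Gamma (\<alpha> / 2)"])
       (simp add: riesz_kernel_def Let_def)
  show "\<exists>D>0. \<forall>u>0. \<forall>v>0. \<forall>y z :: real ^ 'n.
               Jf (bessel_kernel \<alpha>) u v y z \<le> ennreal (D * (u + v) powr (- (real CARD('n) - \<alpha>) / 2))"
    by (rule J_sing_final[OF a bessel_le[OF a]])
next
  assume a: "0 < \<alpha>"
  show "\<exists>C. \<forall>u>0. \<forall>v>0. \<forall>y z :: real ^ 'n. Jf (heat_kernel \<alpha>) u v y z \<le> ennreal C"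
  proof (intro exI allI impI)
    fix u v :: real and y z :: "real^'n" assume u: "0 < u" and v: "0 < v"
    show "Jf (heat_kernel \<alpha>) u v y z \<le> ennreal ((2 * pi * \<alpha>) powr (- real CARD('n) / 2))"
      by (rule J_bdd[OF _ _ u v]) (use a in \<open>auto simp: heat_kernel_def intro!: mult_left_le\<close>)
  qed
  show "\<exists>C. \<forall>u>0. \<forall>v>0. \<forall>y z :: real ^ 'n. Jf (poisson_kernel \<alpha>) u v y z \<le> ennreal C"
  proof (intro exI allI impI)
    fix u v :: real and y z :: "real^'n" assume u: "0 < u" and v: "0 < v"
    define P where "P = pi powr (- (real CARD('n) + 1) / 2) * Gamma ((real CARD('n) + 1) / 2) * \<alpha>"
    have P: "0 \<le> P" using a by (simp add: P_def Gamma_real_pos less_imp_le)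
    show "Jf (poisson_kernel \<alpha>) u v y z \<le> ennreal (P * (\<alpha>\<^sup>2) powr (- (real CARD('n) + 1) / 2))"
    proof (rule J_bdd[OF _ _ u v])
      show "0 \<le> P * (\<alpha>\<^sup>2) powr (- (real CARD('n) + 1) / 2)" using P by simp
      fix w :: "real^'n"
      have "((norm w)\<^sup>2 + \<alpha>\<^sup>2) powr (- (real CARD('n) + 1) / 2) \<le> (\<alpha>\<^sup>2) powr (- (real CARD('n) + 1) / 2)"
        using a by (intro powr_mono2') (auto simp: divide_nonpos_pos)
      then have "P * ((norm w)\<^sup>2 + \<alpha>\<^sup>2) powr (- (real CARD('n) + 1) / 2) \<le> P * (\<alpha>\<^sup>2) powr (- (real CARD('n) + 1) / 2)"
        using P by (rule mult_left_mono)
      then show "poisson_kernel \<alpha> w \<le> P * (\<alpha>\<^sup>2) powr (- (real CARD('n) + 1) / 2)"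
        by (simp add: poisson_kernel_def Let_def P_def)
    qed
  qed
qed

end
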